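(* Let $K$ and $K'$ be two non-degenerate CMIs, with $\mathrm{can}(\mathrm{pur}(K))=(C,\langle\mathbb I_K,\mathbb I_K,P_i,1\le i\le t\rangle)$ and $\mathrm{can}(\mathrm{pur}(K'))=(C',\langle\mathbb I_{K'},\mathbb I_{K'},P'_j,1\le j\le s\rangle)$. (1) If $R_K^{K'}=(\cdot,\langle\ \rangle)$, then $K$ implies $K'$ if and only if $C\subseteq C'$. (2) If $R_K^{K'}\ne(\cdot,\langle\ \rangle)$, then $K$ implies $K'$ if and only if $K$ implies $R_K^{K'}$.
   Context: Setting: $X_1,\dots,X_n$ jointly distributed discrete random variables with $H(X_i)<\infty$; distribution unspecified. $X_\alpha=(X_i,i\in\alpha)$, $X_\emptyset$ constant. A CMI is $K=(C,\langle Q_1,\dots,Q_k\rangle)$, $k\ge0$, $C\subseteq\{1,\dots,n\}$, $\langle\cdot\rangle$ an unordered multiset of subsets; valid (for a given distribution) if $\sum_iH(X_{Q_i}|X_C)-H(X_{Q_1},\dots,X_{Q_k}|X_C)=0$. Empty members may be deleted. Degenerate = valid for every distribution, written $(\cdot,\langle\ \rangle)$. "$K$ implies $K'$": for every joint distribution, if $K$ is valid then $K'$ is valid. $\mathrm{pur}(K)=(C,\langle Q_i\setminus C:Q_i\setminus C\ne\emptyset\rangle)$. For pure $K$: $\mathbb I_K$ = indices lying in at least two members of the collection if $k\ge2$, else $\emptyset$; $P_1,\dots,P_t$ the nonempty sets among $Q_i\setminus\mathbb I_K$; $\mathrm{can}(K)=(\cdot,\langle\ \rangle)$ if $k\le1$,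 $(C,\langle\mathbb I_K,\mathbb I_K\rangle)$ if $k\ge2,\mathbb I_K\ne\emptyset,t\le1$, $(C,\langle P_1..P_t\rangle)$ if $k\ge2,\mathbb I_K=\emptyset$, $(C,\langle\mathbb I_K,\mathbb I_K,P_1..P_t\rangle)$ if $k\ge2,\mathbb I_K\ne\emptyset,t\ge2$. For general $K$, $\mathbb I_K$ is the repeated-index set of $\mathrm{pur}(K)$; general-form notation omits copies of $\mathbb I_K$ when empty and uses $t=0$ for $(C,\langle\mathbb I_K,\mathbb I_K\rangle)$. $R_K^{K'}$: with $D=\mathbb I_{K'}\setminus\mathbb I_K$ and $T_1,\dots,T_u$ the nonempty sets among $P'_j\setminus\mathbb I_K$: $R_K^{K'}=(\cdot,\langle\ \rangle)$ if $D=\emptyset,u\le1$; $(C'\setminus\mathbb I_K,\langle T_1..T_u\rangle)$ if $D=\emptyset,u\ge2$; $(C'\setminus\mathbb I_K,\langle D,D\rangle)$ if $D\ne\emptyset,u\le1$; $(C'\setminus\mathbb I_K,\langle D,D,T_1..T_u\rangle)$ if $D\ne\emptyset,u\ge2$. *)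

theory Defs
  imports "HOL-Probability.Probability"
begin

text \<open>A joint distribution of the discrete random variables X_1..X_n is modelled as a
  pmf on value-assignments f :: nat => nat (f i is the value of X_i; every discrete
  random variable can be injectively recoded into nat, which does not change entropy).
  X_alpha is the restriction of the assignment to alpha.\<close>

type_synonym dist = "(nat \<Rightarrow> nat) pmf"

definition marg :: "dist \<Rightarrow> nat set \<Rightarrow> (nat \<Rightarrow> nat) pmf" where
  "marg p A = map_pmf (\<lambda>f i. if i \<in> A then f i else 0) p"

definition ent_term :: "'a pmf \<Rightarrow> 'a \<Rightarrow> real" where
  "ent_term q y = - (pmf q y * log 2 (pmf q y))"

definition ent :: "'a pmf \<Rightarrow> real" where
  "ent q = infsum (ent_term q) (set_pmf q)"

definition finite_ent :: "'a pmf \<Rightarrow> bool" where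
  "finite_ent q \<longleftrightarrow> ent_term q summable_on set_pmf q"

definition H :: "dist \<Rightarrow> nat set \<Rightarrow> real" where
  "H p A = ent (marg p A)"

definition condH :: "dist \<Rightarrow> nat set \<Rightarrow> nat set \<Rightarrow> real" where
  "condH p A C = H p (A \<union> C) - H p C"

definition admissible :: "nat \<Rightarrow> dist \<Rightarrow> bool" where
  "admissible n p \<longleftrightarrow> (\<forall>i\<in>{1..n}. finite_ent (marg p {i}))"

type_synonym cmi = "nat set \<times> nat set multiset"

definition wf_cmi :: "nat \<Rightarrow> cmi \<Rightarrow> bool" where
  "wf_cmi n K \<longleftrightarrow> fst K \<subseteq> {1..n} \<and> (\<forall>Q\<in>#snd K. Q \<subseteq> {1..n})"

definition valid :: "dist \<Rightarrow> cmi \<Rightarrow> bool" where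
  "valid p K \<longleftrightarrow>
     (\<Sum>Q\<in>#snd K. condH p Q (fst K)) - condH p (\<Union>(set_mset (snd K))) (fst K) = 0"

definition degenerate :: "nat \<Rightarrow> cmi \<Rightarrow> bool" where
  "degenerate n K \<longleftrightarrow> (\<forall>p. admissible n p \<longrightarrow> valid p K)"

definition implies :: "nat \<Rightarrow> cmi \<Rightarrow> cmi \<Rightarrow> bool" where
  "implies n K K' \<longleftrightarrow> (\<forall>p. admissible n p \<longrightarrow> valid p K \<longrightarrow> valid p K')"

text \<open>Representative of the degenerate CMI (.,< >) produced by the syntactic
  constructions can and R.\<close>
definition deg_cmi :: cmi where
  "deg_cmi = ({}, {#})"

definition pur :: "cmi \<Rightarrow> cmi" where
  "pur K = (fst K, image_mset (\<lambda>Q. Q - fst K) (filter_mset (\<lambda>Q. Q - fst K \<noteq> {}) (snd K)))"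

definition rep_idx :: "nat set multiset \<Rightarrow> nat set" where
  "rep_idx Qs = (if 2 \<le> size Qs then {i. 2 \<le> size (filter_mset (\<lambda>Q. i \<in> Q) Qs)} else {})"

definition II :: "cmi \<Rightarrow> nat set" where
  "II K = rep_idx (snd (pur K))"

definition Ps :: "cmi \<Rightarrow> nat set multiset" where
  "Ps K = filter_mset (\<lambda>P. P \<noteq> {}) (image_mset (\<lambda>Q. Q - II K) (snd (pur K)))"

definition R :: "cmi \<Rightarrow> cmi \<Rightarrow> cmi" where
  "R K K' =
    (let D = II K' - II K;
         Ts = filter_mset (\<lambda>T. T \<noteq> {}) (image_mset (\<lambda>P. P - II K) (Ps K'));
         u = size Ts;
         C'' = fst K' - II K
     in if D = {} \<and> u \<le> 1 then deg_cmi
        else if D = {} then (C'', Ts)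
        else if u \<le> 1 then (C'', {#D, D#})
        else (C'', {#D, D#} + Ts))"

end

theory Submission
  imports Defs
begin


lemma bridge_int:
  fixes r :: "'a pmf" and f :: "'a \<Rightarrow> real"
  shows "integrable (measure_pmf r) f \<longleftrightarrow> Infinite_Set_Sum.abs_summable_on (\<lambda>x. pmf r x * f x) UNIV"
proof -
  have "integrable (measure_pmf r) f \<longleftrightarrow> integrable (density (count_space UNIV) (\<lambda>x. ennreal (pmf r x))) f"
    by (simp add: measure_pmf_eq_density)
  also have "\<dots> \<longleftrightarrow> integrable (count_space UNIV) (\<lambda>x. pmf r x *\<^sub>R f x)"
    by (rule integrable_density) auto
  finally show ?thesis by (simp add: abs_summable_on_def)
qed

lemma bridge_integral:
  fixes r :: "'a pmf" and f :: "'a \<Rightarrow> real"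
  shows "integral\<^sup>L (measure_pmf r) f = infsetsum (\<lambda>x. pmf r x * f x) UNIV"
proof -
  have "integral\<^sup>L (measure_pmf r) f = integral\<^sup>L (density (count_space UNIV) (\<lambda>x. ennreal (pmf r x))) f"
    by (simp add: measure_pmf_eq_density)
  also have "\<dots> = integral\<^sup>L (count_space UNIV) (\<lambda>x. pmf r x *\<^sub>R f x)"
    by (rule integral_density) auto
  finally show ?thesis by (simp add: infsetsum_def)
qed

lemma bridge_hassum:
  fixes r :: "'a pmf" and f :: "'a \<Rightarrow> real"
  assumes "integrable (measure_pmf r) f"
  shows "((\<lambda>x. pmf r x * f x) has_sum integral\<^sup>L (measure_pmf r) f) (set_pmf r)"
proof -
  have a: "Infinite_Set_Sum.abs_summable_on (\<lambda>x. pmf r x * f x) UNIV" using assms bridge_int by blast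
  then have "(\<lambda>x. norm (pmf r x * f x)) summable_on UNIV"
    using abs_summable_equivalent[THEN iffD2, OF a] by simp
  then have s: "(\<lambda>x. pmf r x * f x) summable_on UNIV"
    using abs_summable_summable[of "\<lambda>x. pmf r x * f x"] by blast
  have e: "integral\<^sup>L (measure_pmf r) f = infsum (\<lambda>x. pmf r x * f x) UNIV"
    using bridge_integral[of r f] infsetsum_infsum[OF a] by (rule trans)
  have "((\<lambda>x. pmf r x * f x) has_sum infsum (\<lambda>x. pmf r x * f x) UNIV) UNIV"
    using s by (simp add: has_sum_infsum)
  then show ?thesis unfolding e
    by (rule has_sum_cong_neutral[THEN iffD1, rotated -1]) (auto simp: set_pmf_eq)
qed

lemma bridge_nonneg:
  fixes r :: "'a pmf" and f :: "'a \<Rightarrow> real"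
  assumes "\<And>x. x \<in> set_pmf r \<Longrightarrow> f x \<ge> 0"
    and "(\<lambda>x. pmf r x * f x) summable_on set_pmf r"
  shows "integrable (measure_pmf r) f"
proof -
  have "(\<lambda>x. pmf r x * f x) summable_on UNIV"
    using assms(2) by (rule summable_on_cong_neutral[THEN iffD1, rotated -1]) (auto simp: set_pmf_eq)
  moreover have "\<And>x. norm (pmf r x * f x) = pmf r x * f x"
  proof -
    fix x show "norm (pmf r x * f x) = pmf r x * f x"
      using assms(1)[of x] by (cases "x \<in> set_pmf r") (auto simp: set_pmf_eq pmf_nonneg)
  qed
  ultimately have "(\<lambda>x. norm (pmf r x * f x)) summable_on UNIV" by simp
  then have "Infinite_Set_Sum.abs_summable_on (\<lambda>x. pmf r x * f x) UNIV"
    using abs_summable_equivalent by blast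
  then show ?thesis using bridge_int by blast
qed

lemma ent_term_eq: "ent_term q y = pmf q y * (- log 2 (pmf q y))"
  by (simp add: ent_term_def)

lemma neglog_nonneg: "x \<in> set_pmf q \<Longrightarrow> 0 \<le> - log 2 (pmf q x)"
  by (simp add: pmf_le_1 set_pmf_iff pmf_pos)

lemma fe_iff: "finite_ent q \<longleftrightarrow> integrable (measure_pmf q) (\<lambda>y. - log 2 (pmf q y))"
proof
  assume "finite_ent q"
  then have "(\<lambda>y. pmf q y * (- log 2 (pmf q y))) summable_on set_pmf q"
    unfolding finite_ent_def ent_term_def by simp
  then show "integrable (measure_pmf q) (\<lambda>y. - log 2 (pmf q y))"
    by (rule bridge_nonneg[rotated]) (rule neglog_nonneg)
next
  assume "integrable (measure_pmf q) (\<lambda>y. - log 2 (pmf q y))"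
  from bridge_hassum[OF this] show "finite_ent q"
    unfolding finite_ent_def ent_term_eq[abs_def] by (rule has_sum_imp_summable)
qed

lemma ent_eq: "integrable (measure_pmf q) (\<lambda>y. - log 2 (pmf q y)) \<Longrightarrow>
   ent q = integral\<^sup>L (measure_pmf q) (\<lambda>y. - log 2 (pmf q y))"
  unfolding ent_def ent_term_eq[abs_def] by (rule infsumI) (rule bridge_hassum)

lemma pmf_hassum1: "(pmf r has_sum 1) (set_pmf r)"
proof -
  have "integrable (measure_pmf r) (\<lambda>_. 1::real)" by simp
  from bridge_hassum[OF this] show ?thesis by simp
qed

lemma gibbs_pt:
  fixes p q :: real
  assumes "p > 0" "q > 0"
  shows "p * (- log 2 p) \<le> p * (- log 2 q) + (q - p) / ln 2"
proof -
  have "ln (q / p) \<le> q / p - 1" using assms by (intro ln_le_minus_one) simp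
  then have "p * ln (q / p) \<le> p * (q / p - 1)" using assms by (intro mult_left_mono) auto
  also have "\<dots> = q - p" using assms by (simp add: field_simps)
  finally have a: "p * (ln q - ln p) \<le> q - p" using assms by (simp add: ln_div)
  have l2: "ln 2 > (0::real)" by simp
  have "p * (- log 2 p) - p * (- log 2 q) = p * (ln q - ln p) / ln 2"
    by (simp add: log_def field_simps)
  also have "\<dots> \<le> (q - p) / ln 2" using a l2 by (intro divide_right_mono) auto
  finally show ?thesis by simp
qed

lemma gibbs:
  fixes r :: "'a pmf" and q :: "'a \<Rightarrow> real"
  assumes pos: "\<And>x. x \<in> set_pmf r \<Longrightarrow> q x > 0"
    and fin: "\<And>F. finite F \<Longrightarrow> F \<subseteq> set_pmf r \<Longrightarrow> sum q F \<le> 1"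
    and int: "integrable (measure_pmf r) (\<lambda>x. - log 2 (q x))"
  shows "integrable (measure_pmf r) (\<lambda>x. - log 2 (pmf r x))"
    and "integral\<^sup>L (measure_pmf r) (\<lambda>x. - log 2 (pmf r x)) \<le> integral\<^sup>L (measure_pmf r) (\<lambda>x. - log 2 (q x))"
proof -
  define S where "S = integral\<^sup>L (measure_pmf r) (\<lambda>x. - log 2 (q x))"
  define s where "s = (\<lambda>x. pmf r x * (- log 2 (q x)))"
  define t where "t = (\<lambda>x. pmf r x * (- log 2 (pmf r x)))"
  have hs: "(s has_sum S) (set_pmf r)" unfolding s_def S_def by (rule bridge_hassum[OF int])
  have q1: "q x \<le> 1" if "x \<in> set_pmf r" for x using fin[of "{x}"] that by auto
  have s_nn: "s x \<ge> 0" if "x \<in> set_pmf r" for x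
  proof -
    have "log 2 (q x) \<le> 0" using q1[OF that] pos[OF that] by simp
    then show ?thesis unfolding s_def by (simp add: mult_nonneg_nonpos)
  qed
  have t_nn: "t x \<ge> 0" if "x \<in> set_pmf r" for x
    using neglog_nonneg[OF that] unfolding t_def by (simp add: mult_nonneg_nonpos)
  have pt: "t x \<le> s x + (q x - pmf r x) / ln 2" if "x \<in> set_pmf r" for x
    unfolding t_def s_def using gibbs_pt[of "pmf r x" "q x"] pos[OF that] that
    by (simp add: pmf_positive)
  have ptF: "sum t F \<le> sum s F + (sum q F - sum (pmf r) F) / ln 2"
    if "finite F" "F \<subseteq> set_pmf r" for F
  proof -
    have "sum t F \<le> sum (\<lambda>x. s x + (q x - pmf r x) / ln 2) F"
      using pt that by (intro sum_mono) auto
    also have "\<dots> = sum s F + (sum q F - sum (pmf r) F) / ln 2"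
      by (simp add: sum.distrib sum_divide_distrib[symmetric] sum_subtractf)
    finally show ?thesis .
  qed
  have "sum t F \<le> S + 1 / ln 2" if "finite F" "F \<subseteq> set_pmf r" for F
  proof -
    have "sum s F \<le> S" using finite_sum_le_infsum[of s "set_pmf r" F] hs that s_nn
      by (metis Diff_iff has_sum_imp_summable infsumI)
    moreover have "(sum q F - sum (pmf r) F) / ln 2 \<le> 1 / ln 2"
      using fin[OF that] sum_nonneg[of F "pmf r"] by (intro divide_right_mono) auto
    ultimately show ?thesis using ptF[OF that] by linarith
  qed
  then have "t summable_on set_pmf r"
    using t_nn by (intro nonneg_bdd_above_summable_on) (auto simp: bdd_above_def)
  then show intt: "integrable (measure_pmf r) (\<lambda>x. - log 2 (pmf r x))"
    unfolding t_def by (rule bridge_nonneg[rotated]) (rule neglog_nonneg)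
  define E where "E = integral\<^sup>L (measure_pmf r) (\<lambda>x. - log 2 (pmf r x))"
  have ht: "(t has_sum E) (set_pmf r)" unfolding t_def E_def by (rule bridge_hassum[OF intt])
  have "((\<lambda>x. t x - s x) has_sum (E - S)) (set_pmf r)" using has_sum_add[OF ht has_sum_uminusI[OF hs]] by simp
  then have l1: "((\<lambda>F. sum (\<lambda>x. t x - s x) F) \<longlongrightarrow> E - S) (finite_subsets_at_top (set_pmf r))"
    by (simp add: has_sum_def)
  have "((\<lambda>F. sum (pmf r) F) \<longlongrightarrow> 1) (finite_subsets_at_top (set_pmf r))"
    using pmf_hassum1[of r] by (simp add: has_sum_def)
  then have l2: "((\<lambda>F. (1 - sum (pmf r) F) / ln 2) \<longlongrightarrow> (1 - 1) / ln 2) (finite_subsets_at_top (set_pmf r))"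
    by (intro tendsto_intros) auto
  have ev: "eventually (\<lambda>F. sum (\<lambda>x. t x - s x) F \<le> (1 - sum (pmf r) F) / ln 2) (finite_subsets_at_top (set_pmf r))"
  proof (rule eventually_finite_subsets_at_top_weakI)
    fix F assume F: "finite F" "F \<subseteq> set_pmf r"
    have "sum (\<lambda>x. t x - s x) F \<le> (sum q F - sum (pmf r) F) / ln 2"
      using ptF[OF F] by (simp add: sum_subtractf)
    also have "\<dots> \<le> (1 - sum (pmf r) F) / ln 2"
      using fin[OF F] by (intro divide_right_mono) auto
    finally show "sum (\<lambda>x. t x - s x) F \<le> (1 - sum (pmf r) F) / ln 2" .
  qed
  have "E - S \<le> (1 - 1) / ln 2"
    by (rule tendsto_le[OF finite_subsets_at_top_neq_bot l2 l1 ev])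
  then show "integral\<^sup>L (measure_pmf r) (\<lambda>x. - log 2 (pmf r x)) \<le> integral\<^sup>L (measure_pmf r) (\<lambda>x. - log 2 (q x))"
    unfolding E_def S_def by simp
qed

lemma sum_pmf_le_pmf_map:
  assumes "finite Y" "Y \<subseteq> c -` {w}"
  shows "sum (pmf ra) Y \<le> pmf (map_pmf c ra) w"
proof -
  have "sum (pmf ra) Y = measure (measure_pmf ra) Y" using assms by (simp add: measure_measure_pmf_finite)
  also have "\<dots> \<le> measure (measure_pmf ra) (c -` {w})"
    using assms by (intro measure_pmf.finite_measure_mono) auto
  also have "\<dots> = pmf (map_pmf c ra) w" by (simp add: pmf_map)
  finally show ?thesis .
qed

lemma fsum_bound:
  fixes r :: "'x pmf" and a :: "'x \<Rightarrow> 'y" and b :: "'x \<Rightarrow> 'z" and ca :: "'y \<Rightarrow> 'w" and cb :: "'z \<Rightarrow> 'w"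
  assumes cc: "\<And>x. x \<in> set_pmf r \<Longrightarrow> ca (a x) = cb (b x)"
    and inj: "inj_on (\<lambda>x. (a x, b x)) (set_pmf r)"
    and F: "finite F" "F \<subseteq> set_pmf r"
  shows "(\<Sum>x\<in>F. pmf (map_pmf a r) (a x) * pmf (map_pmf b r) (b x) / pmf (map_pmf (\<lambda>x. ca (a x)) r) (ca (a x))) \<le> 1"
proof -
  define ra where "ra = map_pmf a r"
  define rb where "rb = map_pmf b r"
  define rc where "rc = map_pmf (\<lambda>x. ca (a x)) r"
  define c where "c = (\<lambda>x. ca (a x))"
  have rca: "map_pmf ca ra = rc" unfolding ra_def rc_def by (simp add: map_pmf_comp)
  have rcb: "map_pmf cb rb = rc" unfolding rb_def rc_def map_pmf_comp
    by (rule map_pmf_cong) (auto simp: cc)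
  define f where "f = (\<lambda>x. pmf ra (a x) * pmf rb (b x) / pmf rc (c x))"
  define W where "W = c ` F"
  have "(\<Sum>x\<in>F. f x) = (\<Sum>w\<in>W. \<Sum>x\<in>{x. x \<in> F \<and> c x = w}. f x)"
    using F unfolding W_def by (intro sum.group[symmetric]) auto
  also have "\<dots> \<le> (\<Sum>w\<in>W. pmf rc w)"
  proof (rule sum_mono)
    fix w assume w: "w \<in> W"
    define Fw where "Fw = {x. x \<in> F \<and> c x = w}"
    have fFw: "finite Fw" using F unfolding Fw_def by auto
    obtain x0 where x0: "x0 \<in> F" "c x0 = w" using w unfolding W_def by auto
    have rcpos: "pmf rc w > 0"
    proof -
      have "w \<in> set_pmf rc" unfolding rc_def using x0 F by (auto simp: c_def)
      then show ?thesis by (simp add: pmf_positive)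
    qed
    have "(\<Sum>x\<in>Fw. f x) = (\<Sum>x\<in>Fw. pmf ra (a x) * pmf rb (b x)) / pmf rc w"
      unfolding f_def Fw_def by (simp add: sum_divide_distrib)
    also have "(\<Sum>x\<in>Fw. pmf ra (a x) * pmf rb (b x)) = (\<Sum>(y,z)\<in>(\<lambda>x. (a x, b x)) ` Fw. pmf ra y * pmf rb z)"
    proof -
      have "Fw \<subseteq> set_pmf r" using F unfolding Fw_def by auto
      then have "inj_on (\<lambda>x. (a x, b x)) Fw" by (rule inj_on_subset[OF inj])
      then show ?thesis by (simp add: sum.reindex)
    qed
    also have "\<dots> \<le> (\<Sum>(y,z)\<in>(a ` Fw) \<times> (b ` Fw). pmf ra y * pmf rb z)"
      using fFw by (intro sum_mono2) auto
    also have "\<dots> = (\<Sum>y\<in>a ` Fw. pmf ra y) * (\<Sum>z\<in>b ` Fw. pmf rb z)"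
      by (simp add: sum_product sum.cartesian_product)
    also have "\<dots> \<le> pmf rc w * pmf rc w"
    proof (intro mult_mono)
      show "(\<Sum>y\<in>a ` Fw. pmf ra y) \<le> pmf rc w"
        unfolding rca[symmetric] using fFw by (intro sum_pmf_le_pmf_map) (auto simp: Fw_def c_def)
      show "(\<Sum>z\<in>b ` Fw. pmf rb z) \<le> pmf rc w"
        unfolding rcb[symmetric] using fFw F by (intro sum_pmf_le_pmf_map) (auto simp: Fw_def c_def cc subset_iff)
    qed (auto simp: sum_nonneg)
    finally have "(\<Sum>x\<in>Fw. f x) \<le> pmf rc w * pmf rc w / pmf rc w"
      using rcpos by (simp add: divide_right_mono)
    then show "(\<Sum>x\<in>{x. x \<in> F \<and> c x = w}. f x) \<le> pmf rc w"
      using rcpos unfolding Fw_def by simp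
  qed
  also have "\<dots> \<le> 1"
  proof -
    have "(\<Sum>w\<in>W. pmf rc w) = measure (measure_pmf rc) W"
      using F unfolding W_def by (simp add: measure_measure_pmf_finite)
    also have "\<dots> \<le> 1" by (rule measure_pmf.prob_le_1)
    finally show ?thesis .
  qed
  finally show ?thesis unfolding f_def ra_def rb_def rc_def c_def .
qed

lemma fe_map_int:
  assumes "finite_ent (map_pmf a r)"
  shows "integrable (measure_pmf r) (\<lambda>x. - log 2 (pmf (map_pmf a r) (a x)))"
  using assms unfolding fe_iff by simp

lemma ent_map_int:
  assumes "finite_ent (map_pmf a r)"
  shows "ent (map_pmf a r) = integral\<^sup>L (measure_pmf r) (\<lambda>x. - log 2 (pmf (map_pmf a r) (a x)))"
  using assms unfolding fe_iff by (simp add: ent_eq)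

lemma pmf_map_pos: "x \<in> set_pmf r \<Longrightarrow> pmf (map_pmf a r) (a x) > 0"
  by (simp add: pmf_positive)

lemma submod_core:
  fixes r :: "'x pmf" and a :: "'x \<Rightarrow> 'y" and b :: "'x \<Rightarrow> 'z" and ca :: "'y \<Rightarrow> 'w" and cb :: "'z \<Rightarrow> 'w"
  assumes cc: "\<And>x. x \<in> set_pmf r \<Longrightarrow> ca (a x) = cb (b x)"
    and inj: "inj_on (\<lambda>x. (a x, b x)) (set_pmf r)"
    and fa: "finite_ent (map_pmf a r)" and fb: "finite_ent (map_pmf b r)"
    and fc: "finite_ent (map_pmf (\<lambda>x. ca (a x)) r)"
  shows "finite_ent r"
    and "ent r + ent (map_pmf (\<lambda>x. ca (a x)) r) \<le> ent (map_pmf a r) + ent (map_pmf b r)"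
proof -
  define c where "c = (\<lambda>x. ca (a x))"
  define q where "q = (\<lambda>x. pmf (map_pmf a r) (a x) * pmf (map_pmf b r) (b x) / pmf (map_pmf c r) (c x))"
  define La where "La = (\<lambda>x. - log 2 (pmf (map_pmf a r) (a x)))"
  define Lb where "Lb = (\<lambda>x. - log 2 (pmf (map_pmf b r) (b x)))"
  define Lc where "Lc = (\<lambda>x. - log 2 (pmf (map_pmf c r) (c x)))"
  have ia: "integrable (measure_pmf r) La" unfolding La_def by (rule fe_map_int[OF fa])
  have ib: "integrable (measure_pmf r) Lb" unfolding Lb_def by (rule fe_map_int[OF fb])
  have ic: "integrable (measure_pmf r) Lc" unfolding Lc_def c_def by (rule fe_map_int[OF fc])
  have eqq: "- log 2 (q x) = La x + Lb x - Lc x" if "x \<in> set_pmf r" for x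
    using pmf_map_pos[OF that, of a] pmf_map_pos[OF that, of b] pmf_map_pos[OF that, of c]
    unfolding q_def La_def Lb_def Lc_def by (simp add: log_mult log_divide)
  have iq0: "integrable (measure_pmf r) (\<lambda>x. La x + Lb x - Lc x)"
    using ia ib ic by auto
  have iq: "integrable (measure_pmf r) (\<lambda>x. - log 2 (q x))"
    using iq0 by (rule integrable_cong_AE[THEN iffD1, rotated -1]) (auto simp: AE_measure_pmf_iff eqq)
  have pos: "q x > 0" if "x \<in> set_pmf r" for x
    using pmf_map_pos[OF that, of a] pmf_map_pos[OF that, of b] pmf_map_pos[OF that, of c]
    unfolding q_def by simp
  have fin: "sum q F \<le> 1" if "finite F" "F \<subseteq> set_pmf r" for F
    using fsum_bound[where r=r and a=a and b=b and ca=ca and cb=cb, OF cc inj that] unfolding q_def c_def by simp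
  note G = gibbs[OF pos fin iq]
  show "finite_ent r" using G(1) by (simp add: fe_iff)
  have "ent r = integral\<^sup>L (measure_pmf r) (\<lambda>x. - log 2 (pmf r x))"
    using G(1) by (rule ent_eq)
  also have "\<dots> \<le> integral\<^sup>L (measure_pmf r) (\<lambda>x. - log 2 (q x))" by (rule G(2))
  also have "\<dots> = integral\<^sup>L (measure_pmf r) (\<lambda>x. La x + Lb x - Lc x)"
    by (rule integral_cong_AE) (auto simp: AE_measure_pmf_iff eqq)
  also have "\<dots> = integral\<^sup>L (measure_pmf r) La + integral\<^sup>L (measure_pmf r) Lb - integral\<^sup>L (measure_pmf r) Lc"
    using ia ib ic by simp
  also have "\<dots> = ent (map_pmf a r) + ent (map_pmf b r) - ent (map_pmf c r)"
    unfolding La_def Lb_def Lc_def c_def using ent_map_int[OF fa] ent_map_int[OF fb] ent_map_int[OF fc] by simp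
  finally show "ent r + ent (map_pmf (\<lambda>x. ca (a x)) r) \<le> ent (map_pmf a r) + ent (map_pmf b r)"
    unfolding c_def by simp
qed

lemma pmf_le_pmf_map: "pmf r x \<le> pmf (map_pmf a r) (a x)"
proof -
  have "pmf r x = measure (measure_pmf r) {x}" by (simp add: measure_pmf_single)
  also have "\<dots> \<le> measure (measure_pmf r) (a -` {a x})"
    by (intro measure_pmf.finite_measure_mono) auto
  also have "\<dots> = pmf (map_pmf a r) (a x)" by (simp add: pmf_map)
  finally show ?thesis .
qed

lemma mono_core:
  assumes fr: "finite_ent r"
  shows "finite_ent (map_pmf a r)" and "ent (map_pmf a r) \<le> ent r"
proof -
  have ir: "integrable (measure_pmf r) (\<lambda>x. - log 2 (pmf r x))" using fr by (simp add: fe_iff)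
  have pt: "- log 2 (pmf (map_pmf a r) (a x)) \<le> - log 2 (pmf r x)" if "x \<in> set_pmf r" for x
    using pmf_le_pmf_map[of r x a] that by (simp add: pmf_positive)
  have nn: "0 \<le> - log 2 (pmf (map_pmf a r) (a x))" if "x \<in> set_pmf r" for x
    using that by (simp add: pmf_positive pmf_le_1)
  have ia: "integrable (measure_pmf r) (\<lambda>x. - log 2 (pmf (map_pmf a r) (a x)))"
  proof (rule Bochner_Integration.integrable_bound[OF ir])
    show "AE x in measure_pmf r. norm (- log 2 (pmf (map_pmf a r) (a x))) \<le> norm (- log 2 (pmf r x))"
      unfolding AE_measure_pmf_iff
    proof
      fix x assume x: "x \<in> set_pmf r"
      have "norm (- log 2 (pmf (map_pmf a r) (a x))) = - log 2 (pmf (map_pmf a r) (a x))"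
        using nn[OF x] by simp
      also have "\<dots> \<le> - log 2 (pmf r x)" by (rule pt[OF x])
      also have "\<dots> \<le> norm (- log 2 (pmf r x))" by simp
      finally show "norm (- log 2 (pmf (map_pmf a r) (a x))) \<le> norm (- log 2 (pmf r x))" .
    qed
  qed simp
  then show "finite_ent (map_pmf a r)" by (simp add: fe_iff)
  have "ent (map_pmf a r) = integral\<^sup>L (measure_pmf r) (\<lambda>x. - log 2 (pmf (map_pmf a r) (a x)))"
    using ia by (simp add: fe_iff ent_eq)
  also have "\<dots> \<le> integral\<^sup>L (measure_pmf r) (\<lambda>x. - log 2 (pmf r x))"
    by (rule integral_mono_AE[OF ia ir]) (use pt in \<open>simp add: AE_measure_pmf_iff\<close>)
  also have "\<dots> = ent r" using ir by (simp add: ent_eq)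
  finally show "ent (map_pmf a r) \<le> ent r" .
qed

lemma fe_finite: "finite (set_pmf q) \<Longrightarrow> finite_ent q"
  unfolding finite_ent_def by (rule summable_on_finite)

definition res :: "nat set \<Rightarrow> (nat \<Rightarrow> nat) \<Rightarrow> (nat \<Rightarrow> nat)" where
  "res A f = (\<lambda>i. if i \<in> A then f i else 0)"

lemma marg_res: "marg p A = map_pmf (res A) p"
  by (simp add: marg_def res_def[abs_def])

lemma res_res: "res A (res B f) = res (A \<inter> B) f"
  by (auto simp: res_def)

lemma map_marg: "map_pmf (res A) (marg p B) = marg p (A \<inter> B)"
  by (simp add: marg_res map_pmf_comp res_res)

lemma set_marg: "set_pmf (marg p B) = res B ` set_pmf p"
  by (simp add: marg_res)

lemma res_inj:
  assumes "x \<in> set_pmf (marg p (A \<union> B))" "y \<in> set_pmf (marg p (A \<union> B))"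
    and "res A x = res A y" "res B x = res B y"
  shows "x = y"
proof -
  obtain f g where "x = res (A \<union> B) f" "y = res (A \<union> B) g" using assms(1,2) by (auto simp: set_marg)
  then show ?thesis using assms(3,4) unfolding res_def by (auto simp: fun_eq_iff) metis+
qed

lemma marg_empty_fe: "finite_ent (marg p {})"
proof -
  have "marg p {} = return_pmf (\<lambda>_. 0)" by (simp add: marg_def map_pmf_const)
  then show ?thesis by (simp add: fe_finite)
qed

lemma H_submod_gen:
  assumes fA: "finite_ent (marg p A)" and fB: "finite_ent (marg p B)" and fAB: "finite_ent (marg p (A \<inter> B))"
  shows "finite_ent (marg p (A \<union> B))" and "H p (A \<union> B) + H p (A \<inter> B) \<le> H p A + H p B"
proof -
  define r where "r = marg p (A \<union> B)"
  have cc: "res (A \<inter> B) (res A x) = res (A \<inter> B) (res B x)" for x by (auto simp: res_def)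
  have inj: "inj_on (\<lambda>x. (res A x, res B x)) (set_pmf r)"
    unfolding r_def by (rule inj_onI) (auto intro: res_inj)
  have ma: "map_pmf (res A) r = marg p A" unfolding r_def map_marg by (rule arg_cong[where f="marg p"]) auto
  have mb: "map_pmf (res B) r = marg p B" unfolding r_def map_marg by (rule arg_cong[where f="marg p"]) auto
  have mc: "map_pmf (\<lambda>x. res (A \<inter> B) (res A x)) r = marg p (A \<inter> B)"
  proof -
    have "map_pmf (\<lambda>x. res (A \<inter> B) (res A x)) r = map_pmf (res (A \<inter> B)) (map_pmf (res A) r)"
      by (simp add: map_pmf_comp)
    also have "\<dots> = marg p (A \<inter> B)" unfolding ma map_marg by (rule arg_cong[where f="marg p"]) auto
    finally show ?thesis .
  qed
  note S = submod_core[where r=r and a="res A" and b="res B" and ca="res (A \<inter> B)" and cb="res (A \<inter> B)",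
      OF cc inj, unfolded ma mb mc, OF fA fB fAB]
  show "finite_ent (marg p (A \<union> B))" using S(1) unfolding r_def .
  show "H p (A \<union> B) + H p (A \<inter> B) \<le> H p A + H p B" using S(2) unfolding r_def H_def .
qed

lemma H_mono_gen:
  assumes "finite_ent (marg p B)" "A \<subseteq> B"
  shows "finite_ent (marg p A)" and "H p A \<le> H p B"
proof -
  have m: "map_pmf (res A) (marg p B) = marg p A" using assms(2) by (simp add: map_marg Int_absorb2)
  show "finite_ent (marg p A)" using mono_core(1)[OF assms(1), of "res A"] unfolding m .
  show "H p A \<le> H p B" using mono_core(2)[OF assms(1), of "res A"] unfolding m H_def .
qed

lemma fe_admissible:
  assumes adm: "admissible n p" and A: "A \<subseteq> {1..n}"
  shows "finite_ent (marg p A)"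
proof -
  have "finite A" using A finite_subset by blast
  then show ?thesis using A
  proof (induction A rule: finite_induct)
    case empty show ?case by (rule marg_empty_fe)
  next
    case (insert i A)
    have fi: "finite_ent (marg p {i})" using adm insert.prems unfolding admissible_def by auto
    have fA: "finite_ent (marg p A)" using insert by auto
    have "finite_ent (marg p ({i} \<inter> A))"
      using H_mono_gen(1)[OF fi, of "{i} \<inter> A"] by auto
    from H_submod_gen(1)[OF fi fA this] show ?case by simp
  qed
qed

lemma H_mono:
  assumes "admissible n p" "B \<subseteq> {1..n}" "A \<subseteq> B"
  shows "H p A \<le> H p B"
  using H_mono_gen(2)[OF fe_admissible[OF assms(1,2)] assms(3)] .

lemma H_submod:
  assumes "admissible n p" "A \<subseteq> {1..n}" "B \<subseteq> {1..n}"
  shows "H p (A \<union> B) + H p (A \<inter> B) \<le> H p A + H p B"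
  using assms by (intro H_submod_gen(2) fe_admissible[OF assms(1)]) auto



definition f1S :: "nat set \<Rightarrow> nat \<Rightarrow> nat" where
  "f1S S = (\<lambda>i. if i \<in> S then 1 else 0)"

definition pS :: "nat set \<Rightarrow> dist" where
  "pS S = pmf_of_set {(\<lambda>_. 0), f1S S}"

lemma set_pS: "set_pmf (pS S) = {(\<lambda>_. 0), f1S S}"
  unfolding pS_def by (simp add: set_pmf_of_set)

lemma ent_return: "ent (return_pmf x) = 0"
  unfolding ent_def ent_term_def by simp

lemma ent_two:
  assumes "u \<noteq> v"
  shows "ent (pmf_of_set {u, v}) = 1"
proof -
  have "ent (pmf_of_set {u, v}) = (\<Sum>y\<in>{u,v}. ent_term (pmf_of_set {u, v}) y)"
    unfolding ent_def by (simp add: set_pmf_of_set)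
  also have "\<dots> = 1" using assms
    by (simp add: ent_term_def pmf_of_set log_divide)
  finally show ?thesis .
qed

lemma H_pS: "H (pS S) A = (if A \<inter> S = {} then 0 else 1)"
proof (cases "A \<inter> S = {}")
  case True
  have "marg (pS S) A = map_pmf (\<lambda>_. res A (\<lambda>_. 0)) (pS S)"
    unfolding marg_res by (rule map_pmf_cong) (use True in \<open>auto simp: set_pS res_def f1S_def fun_eq_iff\<close>)
  then have "marg (pS S) A = return_pmf (res A (\<lambda>_. 0))" by (simp add: map_pmf_const)
  then show ?thesis using True by (simp add: H_def ent_return)
next
  case False
  then obtain i where i: "i \<in> A" "i \<in> S" by auto
  have ne: "res A (\<lambda>_. 0) \<noteq> res A (f1S S)"
    using i by (auto simp: res_def f1S_def fun_eq_iff)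
  then have "(\<lambda>_. 0::nat) \<noteq> f1S S" by auto
  have "marg (pS S) A = pmf_of_set (res A ` {(\<lambda>_. 0), f1S S})"
    unfolding marg_res pS_def using ne by (intro map_pmf_of_set_inj) (auto simp: inj_on_def)
  also have "res A ` {(\<lambda>_. 0), f1S S} = {res A (\<lambda>_. 0), res A (f1S S)}" by simp
  finally show ?thesis using False ne by (simp add: H_def ent_two)
qed

lemma adm_pS: "admissible n (pS S)"
  unfolding admissible_def
  by (auto intro!: fe_finite simp: marg_res set_pS)



definition pm :: "(nat set \<Rightarrow> real) \<Rightarrow> nat set \<Rightarrow> bool" where
  "pm h U \<longleftrightarrow> (\<forall>A B. B \<subseteq> U \<longrightarrow> A \<subseteq> B \<longrightarrow> h A \<le> h B) \<and>
     (\<forall>A B. A \<subseteq> U \<longrightarrow> B \<subseteq> U \<longrightarrow> h (A \<union> B) + h (A \<inter> B) \<le> h A + h B)"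

definition gC :: "(nat set \<Rightarrow> real) \<Rightarrow> nat set \<Rightarrow> nat set \<Rightarrow> real" where
  "gC h C X = h (X \<union> C) - h C"

definition Dl :: "(nat set \<Rightarrow> real) \<Rightarrow> nat set \<Rightarrow> nat set multiset \<Rightarrow> real" where
  "Dl h C M = (\<Sum>Q\<in>#M. gC h C Q) - gC h C (\<Union>(set_mset M))"

definition vld :: "(nat set \<Rightarrow> real) \<Rightarrow> nat set \<Rightarrow> nat set multiset \<Rightarrow> bool" where
  "vld h C M \<longleftrightarrow> Dl h C M = 0"

lemma valid_vld: "valid p K \<longleftrightarrow> vld (H p) (fst K) (snd K)"
  unfolding valid_def vld_def Dl_def gC_def condH_def ..

lemma pm_mono: "pm h U \<Longrightarrow> B \<subseteq> U \<Longrightarrow> A \<subseteq> B \<Longrightarrow> h A \<le> h B"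
  unfolding pm_def by blast

lemma pm_submod: "pm h U \<Longrightarrow> A \<subseteq> U \<Longrightarrow> B \<subseteq> U \<Longrightarrow> h (A \<union> B) + h (A \<inter> B) \<le> h A + h B"
  unfolding pm_def by blast

lemma g_empty[simp]: "gC h C {} = 0"
  by (simp add: gC_def)

lemma g_self: "gC h C C = 0"
  by (simp add: gC_def)

lemma g_absorb: "gC h C (X - C) = gC h C X"
  by (simp add: gC_def)

lemma g_mono: "pm h U \<Longrightarrow> C \<subseteq> U \<Longrightarrow> Y \<subseteq> U \<Longrightarrow> X \<subseteq> Y \<Longrightarrow> gC h C X \<le> gC h C Y"
  unfolding gC_def using pm_mono[of h U "Y \<union> C" "X \<union> C"] by auto

lemma g_nn: "pm h U \<Longrightarrow> C \<subseteq> U \<Longrightarrow> X \<subseteq> U \<Longrightarrow> 0 \<le> gC h C X"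
  using g_mono[of h U C X "{}"] by simp

lemma g_submod:
  assumes "pm h U" "C \<subseteq> U" "X \<subseteq> U" "Y \<subseteq> U"
  shows "gC h C (X \<union> Y) + gC h C (X \<inter> Y) \<le> gC h C X + gC h C Y"
proof -
  have "h ((X \<union> C) \<union> (Y \<union> C)) + h ((X \<union> C) \<inter> (Y \<union> C)) \<le> h (X \<union> C) + h (Y \<union> C)"
    using assms by (intro pm_submod[OF assms(1)]) auto
  moreover have "(X \<union> C) \<union> (Y \<union> C) = (X \<union> Y) \<union> C" "(X \<union> C) \<inter> (Y \<union> C) = (X \<inter> Y) \<union> C" by auto
  ultimately show ?thesis unfolding gC_def by simp
qed

lemma g_subadd:
  assumes "pm h U" "C \<subseteq> U" "X \<subseteq> U" "Y \<subseteq> U"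
  shows "gC h C (X \<union> Y) \<le> gC h C X + gC h C Y"
proof -
  have "X \<inter> Y \<subseteq> U" using assms by auto
  then show ?thesis using g_submod[OF assms] g_nn[OF assms(1,2), of "X \<inter> Y"] by linarith
qed

lemma g_null_un:
  assumes "pm h U" "C \<subseteq> U" "X \<subseteq> U" "J \<subseteq> U" "gC h C J = 0"
  shows "gC h C (X \<union> J) = gC h C X"
  using g_subadd[OF assms(1-4)] g_mono[OF assms(1,2), of "X \<union> J" X] assms by auto

lemma g_null_diff:
  assumes "pm h U" "C \<subseteq> U" "X \<subseteq> U" "J \<subseteq> U" "gC h C J = 0"
  shows "gC h C (X - J) = gC h C X"
proof -
  have "gC h C ((X - J) \<union> J) = gC h C (X - J)" using assms by (intro g_null_un) auto
  moreover have "gC h C (X \<union> J) = gC h C X" using assms by (intro g_null_un) auto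
  moreover have "(X - J) \<union> J = X \<union> J" by auto
  ultimately show ?thesis by simp
qed

lemma g_cond_reduce:
  assumes "pm h U" "C \<subseteq> C'" "C' \<subseteq> U" "X \<subseteq> U"
  shows "gC h C' X \<le> gC h C X"
proof -
  have "h ((X \<union> C) \<union> C') + h ((X \<union> C) \<inter> C') \<le> h (X \<union> C) + h C'"
    using assms by (intro pm_submod[OF assms(1)]) auto
  moreover have "h C \<le> h ((X \<union> C) \<inter> C')"
    using assms by (intro pm_mono[OF assms(1)]) auto
  moreover have "(X \<union> C) \<union> C' = X \<union> C'" using assms by auto
  ultimately show ?thesis unfolding gC_def by simp
qed

lemma g_null_union_closed:
  assumes "pm h U" "C \<subseteq> U" "X \<subseteq> U" "J \<subseteq> U" "gC h C J = 0" "gC h C X = 0"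
  shows "gC h C (X \<union> J) = 0"
  using g_null_un[OF assms(1-5)] assms(6) by simp

lemma g_null_sub:
  assumes "pm h U" "C \<subseteq> U" "Y \<subseteq> U" "X \<subseteq> Y" "gC h C Y = 0"
  shows "gC h C X = 0"
  using g_mono[OF assms(1,2,3,4)] g_nn[OF assms(1,2), of X] assms by auto

lemma g_null_finite:
  assumes "pm h U" "C \<subseteq> U" "finite J" "J \<subseteq> U" "\<And>i. i \<in> J \<Longrightarrow> gC h C {i} = 0"
  shows "gC h C J = 0"
  using assms(3-5)
proof (induction J rule: finite_induct)
  case empty then show ?case by simp
next
  case (insert i J)
  have "gC h C ({i} \<union> J) = 0"
    using insert by (intro g_null_union_closed[OF assms(1,2)]) auto
  then show ?case by simp
qed

lemma Union_mset_sub: "(\<forall>Q\<in>#M. Q \<subseteq> U) \<Longrightarrow> \<Union>(set_mset M) \<subseteq> U"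
  by auto

lemma Dl_add:
  assumes "pm h U" "C \<subseteq> U" "\<forall>Q\<in>#M. Q \<subseteq> U" "\<forall>Q\<in>#N. Q \<subseteq> U"
  shows "Dl h C M + Dl h C N \<le> Dl h C (M + N)"
proof -
  have "gC h C (\<Union>(set_mset M) \<union> \<Union>(set_mset N)) \<le> gC h C (\<Union>(set_mset M)) + gC h C (\<Union>(set_mset N))"
    using assms by (intro g_subadd[OF assms(1,2)]) auto
  moreover have "\<Union>(set_mset (M + N)) = \<Union>(set_mset M) \<union> \<Union>(set_mset N)" by auto
  ultimately show ?thesis unfolding Dl_def by simp
qed

lemma Dl_empty[simp]: "Dl h C {#} = 0"
  by (simp add: Dl_def)

lemma Dl_single[simp]: "Dl h C {#Q#} = 0"
  by (simp add: Dl_def)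

lemma Dl_nn:
  assumes "pm h U" "C \<subseteq> U" "\<forall>Q\<in>#M. Q \<subseteq> U"
  shows "0 \<le> Dl h C M"
  using assms(3)
proof (induction M)
  case empty then show ?case by simp
next
  case (add Q M)
  have "Dl h C {#Q#} + Dl h C M \<le> Dl h C ({#Q#} + M)"
    using add.prems by (intro Dl_add[OF assms(1,2)]) auto
  then show ?case using add by simp
qed

lemma Dl_pair:
  assumes "pm h U" "C \<subseteq> U" "A \<subseteq> U" "B \<subseteq> U"
  shows "gC h C (A \<inter> B) \<le> Dl h C {#A, B#}"
  using g_submod[OF assms] unfolding Dl_def by (simp add: Un_commute)

lemma Dl_sub:
  assumes "pm h U" "C \<subseteq> U" "\<forall>Q\<in>#M. Q \<subseteq> U" "N \<subseteq># M"
  shows "Dl h C N \<le> Dl h C M"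
proof -
  have M: "M = N + (M - N)" using assms(4) by simp
  have "Dl h C N + Dl h C (M - N) \<le> Dl h C (N + (M - N))"
    using assms by (intro Dl_add[OF assms(1,2)]) (auto dest: mset_subset_eqD in_diffD)
  moreover have "0 \<le> Dl h C (M - N)"
    using assms by (intro Dl_nn[OF assms(1,2)]) (auto dest: in_diffD)
  ultimately show ?thesis using M by simp
qed

definition repS :: "nat set multiset \<Rightarrow> nat set" where
  "repS M = {i. 2 \<le> size (filter_mset (\<lambda>Q. i \<in> Q) M)}"

lemma rep_idx_eq: "rep_idx M = repS M"
  by (auto simp: rep_idx_def repS_def) (meson order_trans size_filter_mset_lesseq)

lemma two_in_filter:
  assumes "2 \<le> size (filter_mset P M)"
  obtains A B where "{#A, B#} \<subseteq># M" "P A" "P B"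
proof -
  have "\<exists>x. x \<in># filter_mset P M" using assms by (cases "filter_mset P M") auto
  then obtain A where A: "A \<in># filter_mset P M" by blast
  have "size (filter_mset P M - {#A#}) \<ge> 1" using assms A by (simp add: size_Diff_submset)
  then have "\<exists>x. x \<in># filter_mset P M - {#A#}" by (cases "filter_mset P M - {#A#}") auto
  then obtain B where B: "B \<in># filter_mset P M - {#A#}" by blast
  have "{#A, B#} \<subseteq># filter_mset P M"
    using A B by (metis add_mset_add_single insert_DiffM insert_subset_eq_iff mset_subset_eq_single subset_mset.add_mono single_subset_iff) 
  moreover have "filter_mset P M \<subseteq># M" by simp
  ultimately have "{#A, B#} \<subseteq># M" by (rule subset_mset.order_trans)
  moreover have "P A" "P B" using A B by (auto dest: in_diffD)
  ultimately show ?thesis using that by blast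
qed

lemma repS_sub: "repS M \<subseteq> \<Union>(set_mset M)"
proof
  fix i assume "i \<in> repS M"
  then obtain A B where "{#A, B#} \<subseteq># M" "i \<in> A" by (auto simp: repS_def elim: two_in_filter)
  then show "i \<in> \<Union>(set_mset M)" by (auto dest: mset_subset_eqD)
qed

lemma rep_null:
  assumes "pm h U" "C \<subseteq> U" "finite U" "\<forall>Q\<in>#M. Q \<subseteq> U" "vld h C M"
  shows "gC h C (repS M) = 0"
proof (rule g_null_finite[OF assms(1,2)])
  have "repS M \<subseteq> U" using repS_sub[of M] assms(4) by auto
  then show "finite (repS M)" "repS M \<subseteq> U" using assms(3) finite_subset by auto
  fix i assume "i \<in> repS M"
  then obtain A B where AB: "{#A, B#} \<subseteq># M" "i \<in> A" "i \<in> B" by (auto simp: repS_def elim: two_in_filter)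
  have "A \<in># M" "B \<in># M" using mset_subset_eqD[OF AB(1), of A] mset_subset_eqD[OF AB(1), of B] by auto
  then have AU: "A \<subseteq> U" "B \<subseteq> U" using assms(4) by auto
  have "gC h C {i} \<le> gC h C (A \<inter> B)" using AB AU by (intro g_mono[OF assms(1,2)]) auto
  also have "\<dots> \<le> Dl h C {#A, B#}" using AU by (rule Dl_pair[OF assms(1,2)])
  also have "\<dots> \<le> Dl h C M" using AB assms by (intro Dl_sub[OF assms(1,2)]) auto
  also have "\<dots> = 0" using assms(5) by (simp add: vld_def)
  finally show "gC h C {i} = 0" using g_nn[OF assms(1,2), of "{i}"] AU AB by auto
qed

lemma vld_img_gen:
  assumes "\<And>Q. Q \<in># M \<Longrightarrow> gC h C (Q - J) = gC h C Q"
    and "gC h C (\<Union>(set_mset M) - J) = gC h C (\<Union>(set_mset M))"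
  shows "vld h C (image_mset (\<lambda>Q. Q - J) M) \<longleftrightarrow> vld h C M"
proof -
  have "(\<Sum>Q\<in>#image_mset (\<lambda>Q. Q - J) M. gC h C Q) = (\<Sum>Q\<in>#M. gC h C (Q - J))"
    by (simp add: multiset.map_comp comp_def)
  also have "\<dots> = (\<Sum>Q\<in>#M. gC h C Q)" using assms(1) by (intro arg_cong[where f=sum_mset] image_mset_cong) auto
  finally have s: "(\<Sum>Q\<in>#image_mset (\<lambda>Q. Q - J) M. gC h C Q) = (\<Sum>Q\<in>#M. gC h C Q)" .
  have "\<Union>(set_mset (image_mset (\<lambda>Q. Q - J) M)) = \<Union>(set_mset M) - J" by auto
  then show ?thesis unfolding vld_def Dl_def s using assms(2) by simp
qed

lemma vld_pur_img: "vld h C (image_mset (\<lambda>Q. Q - C) M) \<longleftrightarrow> vld h C M"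
  by (rule vld_img_gen) (auto simp: g_absorb)

lemma vld_null:
  assumes "pm h U" "C \<subseteq> U" "J \<subseteq> U" "\<forall>Q\<in>#M. Q \<subseteq> U" "gC h C J = 0"
  shows "vld h C (image_mset (\<lambda>Q. Q - J) M) \<longleftrightarrow> vld h C M"
  using assms by (intro vld_img_gen g_null_diff[OF assms(1,2)]) auto

lemma sum_mset_filter_zero:
  assumes "\<And>Q. Q \<in># M \<Longrightarrow> \<not> P Q \<Longrightarrow> f Q = (0::real)"
  shows "(\<Sum>Q\<in>#filter_mset P M. f Q) = (\<Sum>Q\<in>#M. f Q)"
  using assms by (induction M) auto

lemma vld_filter: "vld h C (filter_mset (\<lambda>Q. Q \<noteq> {}) M) \<longleftrightarrow> vld h C M"
proof -
  have "(\<Sum>Q\<in>#filter_mset (\<lambda>Q. Q \<noteq> {}) M. gC h C Q) = (\<Sum>Q\<in>#M. gC h C Q)"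
    by (rule sum_mset_filter_zero) auto
  moreover have "\<Union>(set_mset (filter_mset (\<lambda>Q. Q \<noteq> {}) M)) = \<Union>(set_mset M)" by auto
  ultimately show ?thesis unfolding vld_def Dl_def by simp
qed

lemma vld_small: "size M \<le> 1 \<Longrightarrow> vld h C M"
proof (cases M)
  case empty then show ?thesis by (simp add: vld_def)
next
  case (add Q M')
  assume "size M \<le> 1"
  then have "M' = {#}" using add by simp
  then show ?thesis using add by (simp add: vld_def)
qed

lemma vld_DD:
  assumes "pm h U" "C \<subseteq> U" "D \<subseteq> U" "\<forall>Q\<in>#M. Q \<subseteq> U"
  shows "vld h C ({#D, D#} + M) \<longleftrightarrow> gC h C D = 0 \<and> vld h C M"
proof
  assume v: "vld h C ({#D, D#} + M)"
  have "Dl h C {#D, D#} + Dl h C M \<le> Dl h C ({#D, D#} + M)"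
    using assms by (intro Dl_add[OF assms(1,2)]) auto
  moreover have "Dl h C {#D, D#} = gC h C D" by (simp add: Dl_def)
  moreover have "0 \<le> gC h C D" using assms by (intro g_nn[OF assms(1,2)])
  moreover have "0 \<le> Dl h C M" using assms by (intro Dl_nn[OF assms(1,2)])
  ultimately show "gC h C D = 0 \<and> vld h C M" using v unfolding vld_def by linarith
next
  assume a: "gC h C D = 0 \<and> vld h C M"
  have "\<Union>(set_mset ({#D, D#} + M)) = \<Union>(set_mset M) \<union> D" by auto
  moreover have "gC h C (\<Union>(set_mset M) \<union> D) = gC h C (\<Union>(set_mset M))"
    using assms a by (intro g_null_un[OF assms(1,2)]) auto
  ultimately show "vld h C ({#D, D#} + M)" using a unfolding vld_def Dl_def by simp
qed

lemma vld_cong: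
  assumes "\<And>X. X \<subseteq> U \<Longrightarrow> gC h C X = gC h C' X" "\<forall>Q\<in>#M. Q \<subseteq> U"
  shows "vld h C M \<longleftrightarrow> vld h C' M"
proof -
  have "(\<Sum>Q\<in>#M. gC h C Q) = (\<Sum>Q\<in>#M. gC h C' Q)"
    using assms by (intro arg_cong[where f=sum_mset] image_mset_cong) auto
  moreover have "gC h C (\<Union>(set_mset M)) = gC h C' (\<Union>(set_mset M))" using assms by (intro assms(1)) auto
  ultimately show ?thesis unfolding vld_def Dl_def by simp
qed

lemma img_filter_swap:
  "image_mset f (filter_mset (\<lambda>Q. P (f Q)) M) = filter_mset P (image_mset f M)"
  by (induction M) auto

lemma pur_snd: "snd (pur K) = filter_mset (\<lambda>Q. Q \<noteq> {}) (image_mset (\<lambda>Q. Q - fst K) (snd K))"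
  unfolding pur_def using img_filter_swap[of "\<lambda>Q. Q - fst K" "\<lambda>Q. Q \<noteq> {}"] by simp

lemma filter_img_chain:
  "filter_mset (\<lambda>Q. Q \<noteq> {}) (image_mset (\<lambda>Q. Q - B) (filter_mset (\<lambda>Q. Q \<noteq> {}) (image_mset (\<lambda>Q. Q - A) M)))
   = filter_mset (\<lambda>Q. Q \<noteq> {}) (image_mset (\<lambda>Q. Q - (A \<union> B)) M)"
  by (induction M) (auto simp: Diff_Un Int_commute Diff_eq)

lemma valid_pur: "valid p K \<longleftrightarrow> vld (H p) (fst K) (snd (pur K))"
  unfolding valid_vld pur_snd vld_filter vld_pur_img ..



lemma vld_pur_gen: "vld h (fst K) (snd (pur K)) \<longleftrightarrow> vld h (fst K) (snd K)"
  unfolding pur_snd vld_filter vld_pur_img ..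

lemma pur_members: "Q \<in># snd (pur K) \<Longrightarrow> Q \<inter> fst K = {} \<and> Q \<noteq> {} \<and> (\<exists>Q0. Q0 \<in># snd K \<and> Q \<subseteq> Q0)"
  unfolding pur_def by auto

lemma pur_sub: "\<forall>Q\<in>#snd K. Q \<subseteq> U \<Longrightarrow> \<forall>Q\<in>#snd (pur K). Q \<subseteq> U"
  using pur_members by blast

lemma II_eq: "II K = repS (snd (pur K))"
  unfolding II_def rep_idx_eq ..

lemma II_sub: "II K \<subseteq> \<Union>(set_mset (snd (pur K)))"
  unfolding II_eq by (rule repS_sub)

lemma II_disj: "II K \<inter> fst K = {}"
  using II_sub[of K] pur_members[of _ K] by blast

lemma II_U: "\<forall>Q\<in>#snd K. Q \<subseteq> U \<Longrightarrow> II K \<subseteq> U"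
  using II_sub[of K] pur_sub[of K U] by blast

lemma Ps_members: "P \<in># Ps K \<Longrightarrow> P \<noteq> {} \<and> (\<exists>Q. Q \<in># snd (pur K) \<and> P \<subseteq> Q)"
  unfolding Ps_def by auto

definition Ts :: "cmi \<Rightarrow> cmi \<Rightarrow> nat set multiset" where
  "Ts K K' = filter_mset (\<lambda>T. T \<noteq> {}) (image_mset (\<lambda>P. P - II K) (Ps K'))"

lemma R_alt: "R K K' =
   (if II K' - II K = {} \<and> size (Ts K K') \<le> 1 then deg_cmi
    else if II K' - II K = {} then (fst K' - II K, Ts K K')
    else if size (Ts K K') \<le> 1 then (fst K' - II K, {#II K' - II K, II K' - II K#})
    else (fst K' - II K, {#II K' - II K, II K' - II K#} + Ts K K'))"
  unfolding R_def Ts_def Let_def ..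

lemma Ts_members: "T \<in># Ts K K' \<Longrightarrow> T \<noteq> {} \<and> T \<inter> fst K' = {} \<and> (\<exists>Q. Q \<in># snd K' \<and> T \<subseteq> Q)"
  unfolding Ts_def using Ps_members[of _ K'] pur_members[of _ K'] by fastforce

lemma Ts_eq: "Ts K K' = filter_mset (\<lambda>Q. Q \<noteq> {}) (image_mset (\<lambda>Q. Q - ((fst K' \<union> II K') \<union> II K)) (snd K'))"
  unfolding Ts_def Ps_def pur_snd filter_img_chain ..

lemma R_vld:
  assumes pm: "pm h U" and fU: "finite U" and w': "fst K' \<subseteq> U" "\<forall>Q\<in>#snd K'. Q \<subseteq> U"
  shows "vld h (fst (R K K')) (snd (R K K')) \<longleftrightarrow>
     gC h (fst K' - II K) (II K' - II K) = 0 \<and> vld h (fst K' - II K) (Ts K K')"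
proof -
  have CU: "fst K' - II K \<subseteq> U" using w' by auto
  have DU: "II K' - II K \<subseteq> U" using II_U[OF w'(2)] by auto
  have TU: "\<forall>Q\<in>#Ts K K'. Q \<subseteq> U" using Ts_members[of _ K K'] w' by blast
  show ?thesis
  proof (cases "II K' - II K = {}")
    case True
    have g0: "gC h (fst K' - II K) (II K' - II K) = 0" unfolding True by simp
    show ?thesis
    proof (cases "size (Ts K K') \<le> 1")
      case T2: True
      have "R K K' = deg_cmi" using True T2 by (simp add: R_alt)
      then show ?thesis using g0 T2 by (simp add: vld_small deg_cmi_def)
    next
      case T2: False
      have "R K K' = (fst K' - II K, Ts K K')" using True T2 by (simp add: R_alt)
      then show ?thesis using g0 by simp
    qed
  next
    case False
    note DD = vld_DD[OF pm CU DU]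
    show ?thesis
    proof (cases "size (Ts K K') \<le> 1")
      case True
      then show ?thesis using False DD[of "{#}"] by (simp add: R_alt vld_small)
    next
      case F2: False
      then show ?thesis using False DD[OF TU] by (simp add: R_alt)
    qed
  qed
qed

lemma prep:
  assumes pm: "pm h U" and fU: "finite U"
    and wK: "fst K \<subseteq> U" "\<forall>Q\<in>#snd K. Q \<subseteq> U" and wK': "fst K' \<subseteq> U" "\<forall>Q\<in>#snd K'. Q \<subseteq> U"
    and sub: "fst K \<subseteq> fst K'" and vK: "vld h (fst K) (snd K)"
  shows "gC h (fst K' - II K) (II K) = 0"
    and "\<And>X. X \<subseteq> U \<Longrightarrow> gC h (fst K') X = gC h (fst K' - II K) X"
proof -
  define C where "C = fst K"
  define C' where "C' = fst K'"
  define I where "I = II K"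
  define C'' where "C'' = C' - I"
  have IU: "I \<subseteq> U" unfolding I_def by (rule II_U[OF wK(2)])
  have C''U: "C'' \<subseteq> U" using wK' unfolding C''_def C'_def by auto
  have gI: "gC h C I = 0"
    unfolding I_def II_eq C_def
    by (rule rep_null[OF pm wK(1) fU pur_sub[OF wK(2)]]) (use vK in \<open>simp add: vld_pur_gen\<close>)
  have CC'': "C \<subseteq> C''" using sub II_disj[of K] unfolding C_def C''_def C'_def I_def by auto
  have "gC h C'' I \<le> gC h C I" by (rule g_cond_reduce[OF pm CC'' C''U IU])
  moreover have "0 \<le> gC h C'' I" by (rule g_nn[OF pm C''U IU])
  ultimately have gI'': "gC h C'' I = 0" using gI by simp
  then show "gC h (fst K' - II K) (II K) = 0" unfolding C''_def C'_def I_def .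
  have hX: "h (X \<union> C') = h (X \<union> C'')" if X: "X \<subseteq> U" for X
  proof -
    have "gC h C'' (X \<union> I) = gC h C'' X" by (rule g_null_un[OF pm C''U X IU gI''])
    then have e: "h (X \<union> I \<union> C'') = h (X \<union> C'')" unfolding gC_def by simp
    have "h (X \<union> C'') \<le> h (X \<union> C')"
      using X wK' by (intro pm_mono[OF pm]) (auto simp: C''_def C'_def)
    moreover have "h (X \<union> C') \<le> h (X \<union> I \<union> C'')"
      using X wK' IU by (intro pm_mono[OF pm]) (auto simp: C''_def C'_def)
    ultimately show ?thesis using e by simp
  qed
  fix X assume "X \<subseteq> U"
  then show "gC h (fst K') X = gC h (fst K' - II K) X"
    using hX[of X] hX[of "{}"] unfolding gC_def C''_def C'_def I_def by simp
qed

lemma J_equiv: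
  assumes pm: "pm h U" and fU: "finite U" and wK': "fst K' \<subseteq> U" "\<forall>Q\<in>#snd K'. Q \<subseteq> U"
    and IU: "II K \<subseteq> U"
    and eq: "\<And>X. X \<subseteq> U \<Longrightarrow> gC h (fst K') X = gC h (fst K' - II K) X"
    and gJ: "gC h (fst K') ((fst K' \<union> II K') \<union> II K) = 0"
  shows "vld h (fst K') (snd K') \<longleftrightarrow> vld h (fst K' - II K) (Ts K K')"
proof -
  define J where "J = (fst K' \<union> II K') \<union> II K"
  have JU: "J \<subseteq> U" unfolding J_def using wK' IU II_U[OF wK'(2)] by auto
  have TU: "\<forall>Q\<in>#Ts K K'. Q \<subseteq> U" using Ts_members[of _ K K'] wK' by blast
  have "vld h (fst K') (snd K') \<longleftrightarrow> vld h (fst K') (image_mset (\<lambda>Q. Q - J) (snd K'))"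
    using vld_null[OF pm wK'(1) JU wK'(2)] gJ unfolding J_def by simp
  also have "\<dots> \<longleftrightarrow> vld h (fst K') (Ts K K')"
    unfolding Ts_eq J_def vld_filter ..
  also have "\<dots> \<longleftrightarrow> vld h (fst K' - II K) (Ts K K')"
    by (rule vld_cong[OF _ TU]) (rule eq)
  finally show ?thesis .
qed

lemma B1:
  assumes pm: "pm h U" and fU: "finite U"
    and wK: "fst K \<subseteq> U" "\<forall>Q\<in>#snd K. Q \<subseteq> U" and wK': "fst K' \<subseteq> U" "\<forall>Q\<in>#snd K'. Q \<subseteq> U"
    and sub: "fst K \<subseteq> fst K'" and vK: "vld h (fst K) (snd K)"
    and vR: "vld h (fst (R K K')) (snd (R K K'))"
  shows "vld h (fst K') (snd K')"
proof -
  note P = prep[OF pm fU wK wK' sub vK]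
  have IU: "II K \<subseteq> U" by (rule II_U[OF wK(2)])
  have I'U: "II K' \<subseteq> U" by (rule II_U[OF wK'(2)])
  from vR have D: "gC h (fst K' - II K) (II K' - II K) = 0" and T: "vld h (fst K' - II K) (Ts K K')"
    using R_vld[OF pm fU wK'] by auto
  have gD: "gC h (fst K') (II K' - II K) = 0" using D P(2)[of "II K' - II K"] I'U by auto
  have gI: "gC h (fst K') (II K) = 0" using P(1) P(2)[OF IU] by simp
  have "gC h (fst K') ((II K' - II K) \<union> II K) = 0"
    using I'U IU by (intro g_null_union_closed[OF pm wK'(1) _ _ gI gD]) auto
  then have "gC h (fst K') (fst K' \<union> ((II K' - II K) \<union> II K)) = 0"
    using I'U IU by (intro g_null_union_closed[OF pm wK'(1) wK'(1) _ _ g_self]) auto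
  moreover have "fst K' \<union> ((II K' - II K) \<union> II K) = (fst K' \<union> II K') \<union> II K" by auto
  ultimately have gJ: "gC h (fst K') ((fst K' \<union> II K') \<union> II K) = 0" by simp
  show ?thesis using J_equiv[OF pm fU wK' IU P(2) gJ] T by simp
qed

lemma B2:
  assumes pm: "pm h U" and fU: "finite U"
    and wK: "fst K \<subseteq> U" "\<forall>Q\<in>#snd K. Q \<subseteq> U" and wK': "fst K' \<subseteq> U" "\<forall>Q\<in>#snd K'. Q \<subseteq> U"
    and sub: "fst K \<subseteq> fst K'" and vK: "vld h (fst K) (snd K)"
    and vK': "vld h (fst K') (snd K')"
  shows "vld h (fst (R K K')) (snd (R K K'))"
proof -
  note P = prep[OF pm fU wK wK' sub vK]
  have IU: "II K \<subseteq> U" by (rule II_U[OF wK(2)])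
  have I'U: "II K' \<subseteq> U" by (rule II_U[OF wK'(2)])
  have gI': "gC h (fst K') (II K') = 0"
    unfolding II_eq
    by (rule rep_null[OF pm wK'(1) fU pur_sub[OF wK'(2)]]) (use vK' in \<open>simp add: vld_pur_gen\<close>)
  have gI: "gC h (fst K') (II K) = 0" using P(1) P(2)[OF IU] by simp
  have "gC h (fst K') (II K' \<union> II K) = 0"
    using I'U IU by (intro g_null_union_closed[OF pm wK'(1) _ _ gI gI'])
  then have "gC h (fst K') (fst K' \<union> (II K' \<union> II K)) = 0"
    using I'U IU by (intro g_null_union_closed[OF pm wK'(1) wK'(1) _ _ g_self]) auto
  moreover have "fst K' \<union> (II K' \<union> II K) = (fst K' \<union> II K') \<union> II K" by auto
  ultimately have gJ: "gC h (fst K') ((fst K' \<union> II K') \<union> II K) = 0" by simp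
  have T: "vld h (fst K' - II K) (Ts K K')" using J_equiv[OF pm fU wK' IU P(2) gJ] vK' by simp
  have "gC h (fst K') (II K' - II K) = 0"
    using I'U by (intro g_null_sub[OF pm wK'(1) I'U _ gI']) auto
  then have D: "gC h (fst K' - II K) (II K' - II K) = 0" using P(2)[of "II K' - II K"] I'U by auto
  show ?thesis using R_vld[OF pm fU wK'] D T by simp
qed



lemma sum_mset_indicator: "(\<Sum>Q\<in>#M. (if P Q then 1 else 0::real)) = real (size (filter_mset P M))"
  by (induction M) auto

lemma not_implies:
  assumes nsub: "\<not> fst K \<subseteq> fst K2"
    and two: "2 \<le> size (filter_mset (\<lambda>Q. Q - fst K2 \<noteq> {}) (snd K2))"
  shows "\<not> implies n K K2"
proof
  assume imp: "implies n K K2"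
  define S where "S = - fst K2"
  define p where "p = pS S"
  have adm: "admissible n p" unfolding p_def by (rule adm_pS)
  have Hp: "H p A = (if A \<inter> S = {} then 0 else 1)" for A unfolding p_def by (rule H_pS)
  obtain i where i: "i \<in> fst K" "i \<notin> fst K2" using nsub by auto
  have g0: "gC (H p) (fst K) X = 0" for X
  proof -
    have "(X \<union> fst K) \<inter> S \<noteq> {}" "fst K \<inter> S \<noteq> {}" using i unfolding S_def by auto
    then show ?thesis unfolding gC_def Hp by simp
  qed
  have "valid p K" unfolding valid_vld vld_def Dl_def g0 by simp
  then have v2: "valid p K2" using imp adm unfolding implies_def by blast
  have g2: "gC (H p) (fst K2) Q = (if Q - fst K2 \<noteq> {} then 1 else 0)" for Q
  proof -
    have "(Q \<union> fst K2) \<inter> S = Q - fst K2" "fst K2 \<inter> S = {}" unfolding S_def by auto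
    then show ?thesis unfolding gC_def Hp by simp
  qed
  have "(\<Sum>Q\<in>#snd K2. gC (H p) (fst K2) Q) = real (size (filter_mset (\<lambda>Q. Q - fst K2 \<noteq> {}) (snd K2)))"
    unfolding g2 by (rule sum_mset_indicator)
  moreover have "gC (H p) (fst K2) (\<Union>(set_mset (snd K2))) \<le> 1" unfolding g2 by simp
  ultimately have "Dl (H p) (fst K2) (snd K2) \<ge> 1" using two unfolding Dl_def by simp
  then show False using v2 unfolding valid_vld vld_def by simp
qed

lemma nondeg_two:
  assumes "\<not> degenerate n K"
  shows "2 \<le> size (filter_mset (\<lambda>Q. Q - fst K \<noteq> {}) (snd K))"
proof (rule ccontr)
  assume a: "\<not> 2 \<le> size (filter_mset (\<lambda>Q. Q - fst K \<noteq> {}) (snd K))"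
  have "size (snd (pur K)) \<le> 1" using a unfolding pur_def by simp
  then have "valid p K" for p unfolding valid_pur by (rule vld_small)
  then show False using assms unfolding degenerate_def by blast
qed

lemma filter_all: "(\<And>x. x \<in># M \<Longrightarrow> P x) \<Longrightarrow> filter_mset P M = M"
  by (induction M) auto

lemma R_nondeg:
  assumes "R K K' \<noteq> deg_cmi"
  shows "2 \<le> size (filter_mset (\<lambda>Q. Q - fst (R K K') \<noteq> {}) (snd (R K K')))"
proof -
  define D where "D = II K' - II K"
  have Ddisj: "D \<inter> fst K' = {}" using II_disj[of K'] unfolding D_def by auto
  have Tm: "T - (fst K' - II K) \<noteq> {}" if "T \<in># Ts K K'" for T
    using Ts_members[OF that] by auto
  have Dm: "D - (fst K' - II K) \<noteq> {}" if "D \<noteq> {}" using that Ddisj by auto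
  show ?thesis
  proof (cases "D = {}")
    case True
    then have ns: "\<not> size (Ts K K') \<le> 1" and eqR: "R K K' = (fst K' - II K, Ts K K')"
      using assms unfolding D_def by (auto simp: R_alt)
    have "filter_mset (\<lambda>Q. Q - fst (R K K') \<noteq> {}) (snd (R K K')) = Ts K K'"
      unfolding eqR snd_conv fst_conv by (rule filter_all) (rule Tm)
    then show ?thesis using ns by simp
  next
    case False
    show ?thesis
    proof (cases "size (Ts K K') \<le> 1")
      case True
      then have eqR: "R K K' = (fst K' - II K, {#D, D#})" using False unfolding D_def by (simp add: R_alt)
      show ?thesis unfolding eqR using Dm[OF False] by simp
    next
      case F2: False
      then have eqR: "R K K' = (fst K' - II K, {#D, D#} + Ts K K')" using False unfolding D_def by (simp add: R_alt)
      have "filter_mset (\<lambda>Q. Q - fst (R K K') \<noteq> {}) (snd (R K K')) = {#D, D#} + Ts K K'"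
        unfolding eqR snd_conv fst_conv by (rule filter_all) (use Dm[OF False] Tm in auto)
      then show ?thesis by simp
    qed
  qed
qed

lemma pm_H: "admissible n p \<Longrightarrow> pm (H p) {1..n}"
  unfolding pm_def using H_mono H_submod by blast

theorem mainTheorem17:
  fixes n :: nat and K K' :: cmi
  assumes "wf_cmi n K" and "wf_cmi n K'"
    and "\<not> degenerate n K" and "\<not> degenerate n K'"
  shows "(R K K' = deg_cmi \<longrightarrow> (implies n K K' \<longleftrightarrow> fst K \<subseteq> fst K'))
       \<and> (R K K' \<noteq> deg_cmi \<longrightarrow> (implies n K K' \<longleftrightarrow> implies n K (R K K')))"
proof -
  have fU: "finite {1..n}" by simp
  have wK: "fst K \<subseteq> {1..n}" "\<forall>Q\<in>#snd K. Q \<subseteq> {1..n}" using assms(1) unfolding wf_cmi_def by auto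
  have wK': "fst K' \<subseteq> {1..n}" "\<forall>Q\<in>#snd K'. Q \<subseteq> {1..n}" using assms(2) unfolding wf_cmi_def by auto
  have sub_of_imp: "fst K \<subseteq> fst K'" if "implies n K K'"
    using not_implies[OF _ nondeg_two[OF assms(4)]] that by blast
  have b1: "implies n K K'" if sub: "fst K \<subseteq> fst K'" and kr: "\<And>p. admissible n p \<Longrightarrow> valid p K \<Longrightarrow> valid p (R K K')"
    unfolding implies_def
  proof (intro allI impI)
    fix p assume adm: "admissible n p" and v: "valid p K"
    show "valid p K'" unfolding valid_vld
      by (rule B1[OF pm_H[OF adm] fU wK wK' sub]) (use v kr[OF adm v] in \<open>simp_all add: valid_vld\<close>)
  qed
  show ?thesis
  proof (intro conjI impI)
    assume deg: "R K K' = deg_cmi"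
    show "implies n K K' \<longleftrightarrow> fst K \<subseteq> fst K'"
    proof
      assume "fst K \<subseteq> fst K'"
      then show "implies n K K'"
        by (rule b1) (simp add: deg valid_vld deg_cmi_def vld_small)
    qed (rule sub_of_imp)
  next
    assume ndeg: "R K K' \<noteq> deg_cmi"
    show "implies n K K' \<longleftrightarrow> implies n K (R K K')"
    proof
      assume imp: "implies n K K'"
      have sub: "fst K \<subseteq> fst K'" by (rule sub_of_imp[OF imp])
      show "implies n K (R K K')" unfolding implies_def
      proof (intro allI impI)
        fix p assume adm: "admissible n p" and v: "valid p K"
        have v': "valid p K'" using imp adm v unfolding implies_def by blast
        show "valid p (R K K')" unfolding valid_vld
          by (rule B2[OF pm_H[OF adm] fU wK wK' sub]) (use v v' in \<open>simp_all add: valid_vld\<close>)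
      qed
    next
      assume imp: "implies n K (R K K')"
      have "fst K \<subseteq> fst (R K K')"
        using not_implies[OF _ R_nondeg[OF ndeg]] imp by blast
      moreover have "fst (R K K') \<subseteq> fst K'"
        by (auto simp: R_alt deg_cmi_def)
      ultimately have sub: "fst K \<subseteq> fst K'" by blast
      show "implies n K K'"
        by (rule b1[OF sub]) (use imp in \<open>auto simp: implies_def\<close>)
    qed
  qed
qed

end
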